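(* Let $T>0$, $N\ge1$, and $p\in L^2([0,T])$. Then $$\sum_{n=0}^{N-1}(2n+1)\Big(\int_0^T p(t)\tilde L_n(t)\,dt\Big)^2\;\le\;N^3\sum_{j=1}^N r_j\Big(\int_0^T p(t)\psi_j^{(1)}(t)\,dt\Big)^2,\qquad r_j:=N^{-3}\sum_{k=j}^N k(2k-1).$$
   Context: $L_n$ is the $n$-th Legendre polynomial on $[-1,1]$ (normalized by $L_n(1)=1$) and $\tilde L_n(t):=L_n(\tfrac{2t}{T}-1)$ for $t\in[0,T]$. Define $\psi_1^{(1)}:=\tilde L_0\equiv1$ and $\psi_n^{(1)}:=\tilde L_{n-1}-\tilde L_{n-2}$ for $n\ge2$. *)

theory Defs
  imports "HOL-Analysis.Analysis"
begin

text \<open>Legendre polynomials on [-1,1], normalized by L_n(1) = 1, via Bonnet's recursion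
  (n+2) L_(n+2)(x) = (2n+3) x L_(n+1)(x) - (n+1) L_n(x).\<close>
fun legendre :: "nat \<Rightarrow> real \<Rightarrow> real" where
  "legendre 0 x = 1"
| "legendre (Suc 0) x = x"
| "legendre (Suc (Suc n)) x =
     ((2 * real n + 3) * x * legendre (Suc n) x - (real n + 1) * legendre n x) / (real n + 2)"

definition shifted_legendre :: "real \<Rightarrow> nat \<Rightarrow> real \<Rightarrow> real" where
  "shifted_legendre T n t = legendre n (2 * t / T - 1)"

definition psi1 :: "real \<Rightarrow> nat \<Rightarrow> real \<Rightarrow> real" where
  "psi1 T n t = (if n \<le> 1 then 1
                 else shifted_legendre T (n - 1) t - shifted_legendre T (n - 2) t)"

definition rcoef :: "nat \<Rightarrow> nat \<Rightarrow> real" where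
  "rcoef N j = (\<Sum>k=j..N. real k * (2 * real k - 1)) / real N ^ 3"

end

theory Submission
  imports Defs
begin

lemma cont_leg2: "continuous_on UNIV (legendre n) \<and> continuous_on UNIV (legendre (Suc n))"
proof (induction n)
  case 0
  have "legendre (Suc 0) = (\<lambda>x. x)" by (rule ext) simp
  moreover have "legendre 0 = (\<lambda>x. 1)" by (rule ext) simp
  ultimately show ?case by (simp add: continuous_on_const continuous_on_id)
next
  case (Suc n)
  have e: "legendre (Suc (Suc n)) = (\<lambda>x. ((2 * real n + 3) * x * legendre (Suc n) x - (real n + 1) * legendre n x) / (real n + 2))"
    by (rule ext) simp
  have "continuous_on UNIV (legendre (Suc (Suc n)))"
    unfolding e using Suc.IH by (intro continuous_intros) auto
  then show ?case using Suc.IH by simp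
qed

lemma cont_leg: "continuous_on UNIV (legendre n)"
  using cont_leg2 by blast

lemma cont_sleg: "continuous_on UNIV (shifted_legendre T n)"
proof -
  have e: "shifted_legendre T n = legendre n \<circ> (\<lambda>t. (2/T)*t - 1)"
    by (rule ext) (cases "T = 0", simp_all add: shifted_legendre_def)
  have c: "continuous_on UNIV (\<lambda>t. c*t - 1)" for c :: real
    by (intro continuous_intros)
  show ?thesis unfolding e
    by (rule continuous_on_compose[OF c continuous_on_subset[OF cont_leg]]) simp
qed

lemma integ_pL:
  assumes m: "set_borel_measurable lborel {0..T} p"
    and i: "set_integrable lborel {0..T} (\<lambda>t. (p t)\<^sup>2)"
  shows "set_integrable lborel {0..(T::real)} (\<lambda>t. p t * shifted_legendre T n t)"
proof -
  let ?L = "shifted_legendre T n"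
  have i2: "integrable lborel (\<lambda>x. indicator {0..T} x *\<^sub>R (?L x)\<^sup>2)"
    by (rule borel_integrable_compact) (auto intro!: continuous_intros cont_sleg[THEN continuous_on_subset])
  have i1: "integrable lborel (\<lambda>x. indicator {0..T} x *\<^sub>R (p x)\<^sup>2)"
    using i unfolding set_integrable_def .
  have f: "integrable lborel (\<lambda>x. indicator {0..T} x *\<^sub>R (p x)\<^sup>2 + indicator {0..T} x *\<^sub>R (?L x)\<^sup>2)"
    using i1 i2 by auto
  have Lm: "?L \<in> borel_measurable lborel"
    using borel_measurable_continuous_onI[OF cont_sleg] by simp
  have pm: "(\<lambda>x. indicator {0..T} x *\<^sub>R p x) \<in> borel_measurable lborel"
    using m unfolding set_borel_measurable_def .
  have gm: "(\<lambda>x. indicator {0..T} x *\<^sub>R (p x * ?L x)) \<in> borel_measurable lborel"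
  proof -
    have "(\<lambda>x. (indicator {0..T} x *\<^sub>R p x) * ?L x) \<in> borel_measurable lborel"
      using pm Lm by measurable
    then show ?thesis by (simp add: mult.assoc)
  qed
  have bnd: "\<bar>a * b\<bar> \<le> a\<^sup>2 + b\<^sup>2" for a b :: real
  proof -
    have "2 * \<bar>a\<bar> * \<bar>b\<bar> \<le> \<bar>a\<bar>\<^sup>2 + \<bar>b\<bar>\<^sup>2"
      using sum_squares_bound[of "\<bar>a\<bar>" "\<bar>b\<bar>"] by simp
    moreover have "\<bar>a * b\<bar> = \<bar>a\<bar> * \<bar>b\<bar>" by (simp add: abs_mult)
    moreover have "\<bar>a\<bar>\<^sup>2 = a\<^sup>2" "\<bar>b\<bar>\<^sup>2 = b\<^sup>2" by simp_all
    moreover have "0 \<le> \<bar>a\<bar> * \<bar>b\<bar>" by simp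
    ultimately show ?thesis by linarith
  qed
  show ?thesis unfolding set_integrable_def
    apply (rule Bochner_Integration.integrable_bound[OF f gm])
    apply (rule AE_I2)
    using bnd by (auto simp: indicator_def)
qed

lemma alg_swap:
  fixes c :: "nat \<Rightarrow> real"
  shows "(\<Sum>n<N. (2 * real n + 1) * real (n+1) * (\<Sum>j=1..n+1. c j))
       = (\<Sum>j=1..N. (\<Sum>k=j..N. real k * (2 * real k - 1)) * c j)"
proof (induction N)
  case 0 then show ?case by simp
next
  case (Suc N)
  have "(\<Sum>j=1..Suc N. (\<Sum>k=j..Suc N. real k * (2 * real k - 1)) * c j)
     = (\<Sum>j=1..Suc N. (\<Sum>k=j..N. real k * (2 * real k - 1)) * c j
          + real (Suc N) * (2 * real (Suc N) - 1) * c j)"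
    by (rule sum.cong) (auto simp: sum.cl_ivl_Suc algebra_simps)
  also have "\<dots> = (\<Sum>j=1..N. (\<Sum>k=j..N. real k * (2 * real k - 1)) * c j)
      + real (Suc N) * (2 * real (Suc N) - 1) * (\<Sum>j=1..Suc N. c j)"
    by (simp add: sum.distrib sum_distrib_left distrib_left)
  finally show ?case using Suc by (simp add: algebra_simps)
qed

lemma telesc:
  fixes a b :: "nat \<Rightarrow> real"
  assumes "b 1 = a 0" "\<And>j. j \<ge> 2 \<Longrightarrow> b j = a (j-1) - a (j-2)"
  shows "a n = (\<Sum>j=1..n+1. b j)"
proof (induction n)
  case 0 then show ?case using assms by simp
next
  case (Suc n)
  have "b (n+2) = a (n+1) - a n" using assms(2)[of "n+2"] by simp
  then show ?case using Suc by simp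
qed

theorem mainTheorem2:
  fixes T :: real and N :: nat and p :: "real \<Rightarrow> real"
  assumes "T > 0" and "N \<ge> 1"
    and "set_borel_measurable lborel {0..T} p"
    and "set_integrable lborel {0..T} (\<lambda>t. (p t)\<^sup>2)"
  shows "(\<Sum>n<N. (2 * real n + 1) *
            (LINT t:{0..T}|lborel. p t * shifted_legendre T n t)\<^sup>2)
         \<le> real N ^ 3 * (\<Sum>j=1..N. rcoef N j *
            (LINT t:{0..T}|lborel. p t * psi1 T j t)\<^sup>2)"
proof -
  define a where "a n = (LINT t:{0..T}|lborel. p t * shifted_legendre T n t)" for n
  define b where "b j = (LINT t:{0..T}|lborel. p t * psi1 T j t)" for j
  have I: "set_integrable lborel {0..T} (\<lambda>t. p t * shifted_legendre T n t)" for n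
    using integ_pL[OF assms(3,4)] .
  have b1: "b 1 = a 0"
    unfolding a_def b_def psi1_def shifted_legendre_def by simp
  have b2: "b j = a (j-1) - a (j-2)" if "j \<ge> 2" for j
  proof -
    have "b j = (LINT t:{0..T}|lborel. p t * shifted_legendre T (j-1) t - p t * shifted_legendre T (j-2) t)"
      unfolding b_def psi1_def using that by (simp add: right_diff_distrib)
    also have "\<dots> = a (j-1) - a (j-2)"
      unfolding a_def by (rule set_integral_diff(2)[OF I I])
    finally show ?thesis .
  qed
  have tel: "a n = (\<Sum>j=1..n+1. b j)" for n by (rule telesc[OF b1 b2])
  have "(\<Sum>n<N. (2 * real n + 1) * (a n)\<^sup>2)
      \<le> (\<Sum>n<N. (2 * real n + 1) * real (n+1) * (\<Sum>j=1..n+1. (b j)\<^sup>2))"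
  proof (rule sum_mono)
    fix n assume "n \<in> {..<N}"
    have "(a n)\<^sup>2 \<le> (\<Sum>j=1..n+1. (b j)\<^sup>2) * real (n+1)"
      using sum_squared_le_sum_of_squares[of b "{1..n+1}"] tel[of n] by simp
    then show "(2 * real n + 1) * (a n)\<^sup>2 \<le> (2 * real n + 1) * real (n+1) * (\<Sum>j=1..n+1. (b j)\<^sup>2)"
      by (simp add: mult.assoc mult.commute mult_left_mono)
  qed
  also have "\<dots> = (\<Sum>j=1..N. (\<Sum>k=j..N. real k * (2 * real k - 1)) * (b j)\<^sup>2)"
    by (rule alg_swap)
  also have "\<dots> = real N ^ 3 * (\<Sum>j=1..N. rcoef N j * (b j)\<^sup>2)"
    using assms(2) by (simp add: rcoef_def sum_distrib_left)
  finally show ?thesis unfolding a_def b_def .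
qed

end
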